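(* There is a function $\rho(\theta)$ with $\rho(\theta)\to1/3$ as $\theta\to0$ such that on every instance with largeness ratio $\theta$, the winning set $\chi_k$ selected by the polynomial-time mechanism described in the context satisfies $F(\chi_k)\ge\rho(\theta)F^\star$; i.e., the mechanism has approximation ratio $1/3$ in large markets.
   Context: Sellers $S=\{1,\dots,n\}$ each own one indivisible item and have a cost $c_i\ge0$. The buyer's utility is a monotone submodular $F:2^S\to\mathbb R_{\ge0}$, budget $B>0$; $c(T)=\sum_{i\in T}c_i$. $F^\star=\max\{F(T):c(T)\le B\}>0$; the largeness ratio is $\theta=\max_{s}F(\{s\})/F^\star$. Greedy sequence $\chi(F)=\langle x_1,\dots,x_n\rangle$: with $\chi_0=\emptyset$, $\chi_i=\{x_1,\dots,x_i\}$, $x_i$ maximizes $(F(\chi_{i-1}\cup\{s\})-F(\chi_{i-1}))/c_s$ over $s\notin\chi_{i-1}$ (ratio $+\infty$ if $c_s=0$; ties arbitrary); $\partial_i=F(\chi_i)-F(\chi_{i-1})$. Mechanism (winner selection): construct $\chi(F)$, let $k$ be the largest integer such that $F(\chi_k)\cdot c_{x_k}/\partial_k\le B/2$, and declare $\chi_k$ the set of winners. *)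

theory Defs
  imports "HOL-Analysis.Analysis"
begin

text \<open>Sellers are S = {1..n}. Sets of sellers are nat sets; F is only
constrained on subsets of S.\<close>

definition sellers :: "nat \<Rightarrow> nat set" where
  "sellers n = {1..n}"

definition cost :: "(nat \<Rightarrow> real) \<Rightarrow> nat set \<Rightarrow> real" where
  "cost c T = (\<Sum>i\<in>T. c i)"

definition monotone_submodular :: "nat set \<Rightarrow> (nat set \<Rightarrow> real) \<Rightarrow> bool" where
  "monotone_submodular S F \<longleftrightarrow>
     (\<forall>T. T \<subseteq> S \<longrightarrow> F T \<ge> 0) \<and>
     (\<forall>A B. A \<subseteq> B \<and> B \<subseteq> S \<longrightarrow> F A \<le> F B) \<and>
     (\<forall>A B s. A \<subseteq> B \<and> B \<subseteq> S \<and> s \<in> S - B \<longrightarrow>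
        F (B \<union> {s}) - F B \<le> F (A \<union> {s}) - F A)"

definition Fstar :: "nat set \<Rightarrow> (nat \<Rightarrow> real) \<Rightarrow> (nat set \<Rightarrow> real) \<Rightarrow> real \<Rightarrow> real" where
  "Fstar S c F B = Max {F T | T. T \<subseteq> S \<and> cost c T \<le> B}"

definition largeness :: "nat set \<Rightarrow> (nat \<Rightarrow> real) \<Rightarrow> (nat set \<Rightarrow> real) \<Rightarrow> real \<Rightarrow> real" where
  "largeness S c F B = Max ((\<lambda>s. F {s}) ` S) / Fstar S c F B"

definition gain_ratio :: "(nat \<Rightarrow> real) \<Rightarrow> (nat set \<Rightarrow> real) \<Rightarrow> nat set \<Rightarrow> nat \<Rightarrow> ereal" where
  "gain_ratio c F A s =
     (if c s = 0 then \<infinity> else ereal ((F (A \<union> {s}) - F A) / c s))"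

definition chi :: "(nat \<Rightarrow> nat) \<Rightarrow> nat \<Rightarrow> nat set" where
  "chi x i = x ` {1..i}"

definition delta :: "(nat set \<Rightarrow> real) \<Rightarrow> (nat \<Rightarrow> nat) \<Rightarrow> nat \<Rightarrow> real" where
  "delta F x i = F (chi x i) - F (chi x (i - 1))"

definition greedy_seq :: "nat \<Rightarrow> (nat \<Rightarrow> real) \<Rightarrow> (nat set \<Rightarrow> real) \<Rightarrow> (nat \<Rightarrow> nat) \<Rightarrow> bool" where
  "greedy_seq n c F x \<longleftrightarrow>
     bij_betw x {1..n} (sellers n) \<and>
     (\<forall>i\<in>{1..n}. \<forall>s \<in> sellers n - chi x (i - 1).
        gain_ratio c F (chi x (i - 1)) s \<le> gain_ratio c F (chi x (i - 1)) (x i))"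

text \<open>Stopping condition F(chi_k) c_{x_k} / partial_k \<le> B/2 (the ratio is read
as +\<infinity>, i.e. the condition fails, when partial_k = 0).\<close>
definition stop_ok :: "(nat \<Rightarrow> real) \<Rightarrow> (nat set \<Rightarrow> real) \<Rightarrow> real \<Rightarrow> (nat \<Rightarrow> nat) \<Rightarrow> nat \<Rightarrow> bool" where
  "stop_ok c F B x k \<longleftrightarrow>
     delta F x k > 0 \<and> F (chi x k) * c (x k) / delta F x k \<le> B / 2"

text \<open>k is the largest index in {1..n} satisfying the condition (k = 0, i.e. no
winners, if no index does).\<close>
definition mech_index :: "nat \<Rightarrow> (nat \<Rightarrow> real) \<Rightarrow> (nat set \<Rightarrow> real) \<Rightarrow> real \<Rightarrow> (nat \<Rightarrow> nat) \<Rightarrow> nat" where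
  "mech_index n c F B x = Max ({0} \<union> {k \<in> {1..n}. stop_ok c F B x k})"

end

theory Submission
  imports Defs
begin

lemma submod_bound:
  assumes ms: "monotone_submodular S F" and A: "A \<subseteq> S" and fT: "finite T" and T: "T \<subseteq> S"
  shows "F (A \<union> T) \<le> F A + (\<Sum>s\<in>T - A. F (A \<union> {s}) - F A)"
  using fT T
proof (induction T rule: finite_induct)
  case empty then show ?case by simp
next
  case (insert t T)
  have IH: "F (A \<union> T) \<le> F A + (\<Sum>s\<in>T - A. F (A \<union> {s}) - F A)" using insert by auto
  have mono: "\<And>X Y. X \<subseteq> Y \<Longrightarrow> Y \<subseteq> S \<Longrightarrow> F X \<le> F Y" using ms unfolding monotone_submodular_def by blast
  show ?case
  proof (cases "t \<in> A")
    case True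
    then have "A \<union> insert t T = A \<union> T" by auto
    moreover have "insert t T - A = T - A" using True by auto
    ultimately show ?thesis using IH by simp
  next
    case False
    have tS: "t \<in> S" using insert by auto
    have sm: "\<And>A B s. A \<subseteq> B \<Longrightarrow> B \<subseteq> S \<Longrightarrow> s \<in> S - B \<Longrightarrow> F (B \<union> {s}) - F B \<le> F (A \<union> {s}) - F A"
      using ms unfolding monotone_submodular_def by blast
    have sub: "F ((A \<union> T) \<union> {t}) - F (A \<union> T) \<le> F (A \<union> {t}) - F A"
      by (rule sm) (use A insert False in auto)
    have e: "insert t T - A = insert t (T - A)" using False by auto
    have "(\<Sum>s\<in>insert t T - A. F (A \<union> {s}) - F A) = (F (A \<union> {t}) - F A) + (\<Sum>s\<in>T - A. F (A \<union> {s}) - F A)"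
      unfolding e using insert by (simp add: sum.insert)
    moreover have "A \<union> insert t T = (A \<union> T) \<union> {t}" by auto
    ultimately show ?thesis using IH sub by simp
  qed
qed

lemma chi_step: "i \<ge> 1 \<Longrightarrow> chi x i = insert (x i) (chi x (i - 1))"
proof -
  assume "i \<ge> 1"
  then obtain j where j: "i = Suc j" by (cases i) auto
  have "{1..Suc j} = insert (Suc j) {1..j}" by (auto simp: atLeastAtMostSuc_conv)
  then show ?thesis unfolding chi_def j by simp
qed


lemma main_bound:
  fixes n :: nat and c :: "nat \<Rightarrow> real" and F :: "nat set \<Rightarrow> real" and B :: real and x :: "nat \<Rightarrow> nat"
  assumes n1: "n \<ge> 1" and Bp: "B > 0" and cnn: "\<forall>i\<in>sellers n. c i \<ge> 0"
    and ms: "monotone_submodular (sellers n) F" and Fp: "Fstar (sellers n) c F B > 0"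
    and gs: "greedy_seq n c F x"
  shows "F (chi x (mech_index n c F B x))
           \<ge> (1/3 - 2 * largeness (sellers n) c F B / 3) * Fstar (sellers n) c F B"
proof -
  define S where "S = sellers n"
  define Fs where "Fs = Fstar S c F B"
  define M where "M = Max ((\<lambda>s. F {s}) ` S)"
  define th where "th = largeness S c F B"
  define k where "k = mech_index n c F B x"
  have finS: "finite S" unfolding S_def sellers_def by simp
  have SnE: "S \<noteq> {}" using n1 unfolding S_def sellers_def by auto
  have Fsp: "Fs > 0" using Fp unfolding Fs_def S_def .
  have thM: "th * Fs = M" unfolding th_def largeness_def M_def Fs_def using Fsp by (simp add: Fs_def)
  have mono: "\<And>X Y. X \<subseteq> Y \<Longrightarrow> Y \<subseteq> S \<Longrightarrow> F X \<le> F Y" using ms unfolding monotone_submodular_def S_def by blast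
  have Fnn: "\<And>X. X \<subseteq> S \<Longrightarrow> F X \<ge> 0" using ms unfolding monotone_submodular_def S_def by blast
  have subm: "\<And>A B s. A \<subseteq> B \<Longrightarrow> B \<subseteq> S \<Longrightarrow> s \<in> S - B \<Longrightarrow> F (B \<union> {s}) - F B \<le> F (A \<union> {s}) - F A"
    using ms unfolding monotone_submodular_def S_def by blast
  have Fsing: "\<And>s. s \<in> S \<Longrightarrow> F {s} \<le> M" unfolding M_def using finS by simp
  have M0: "M \<ge> 0" using SnE Fsing Fnn proof -
    obtain s where "s \<in> S" using SnE by blast
    then have "F {s} \<ge> 0" "F {s} \<le> M" using Fnn Fsing by auto
    then show ?thesis by linarith
  qed
  have th0: "th \<ge> 0" using thM M0 Fsp proof -
    have "th = M / Fs" using thM Fsp by (simp add: eq_divide_eq)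
    then show ?thesis using M0 Fsp by simp
  qed
  have finset: "finite {F T | T. T \<subseteq> S \<and> cost c T \<le> B}" using finS by simp
  have nemp: "{F T | T. T \<subseteq> S \<and> cost c T \<le> B} \<noteq> {}" using Bp by (auto simp: cost_def intro!: exI[of _ "{}"])
  obtain Opt where Opt: "Opt \<subseteq> S" "cost c Opt \<le> B" "Fs = F Opt"
    using Max_in[OF finset nemp] unfolding Fs_def Fstar_def by auto
  have finOpt: "finite Opt" using Opt finS finite_subset by blast
  have bij: "bij_betw x {1..n} S" using gs unfolding greedy_seq_def S_def by blast
  have xS: "\<And>i. i \<in> {1..n} \<Longrightarrow> x i \<in> S" using bij bij_betwE by blast
  have chiS: "\<And>i. i \<le> n \<Longrightarrow> chi x i \<subseteq> S" unfolding chi_def using xS by auto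
  have chin: "chi x n = S" unfolding chi_def using bij bij_betw_imp_surj_on by blast
  have xnot: "\<And>i. i \<in> {1..n} \<Longrightarrow> x i \<notin> chi x (i - 1)"
  proof
    fix i assume i: "i \<in> {1..n}" and "x i \<in> chi x (i - 1)"
    then obtain j where j: "j \<in> {1..i-1}" "x j = x i" unfolding chi_def by auto
    have ji: "j \<in> {1..n}" using j i by auto
    have "j = i" using inj_onD[OF bij_betw_imp_inj_on[OF bij] j(2) ji i] .
    then show False using j i by auto
  qed
  have dnn: "\<And>i. i \<in> {1..n} \<Longrightarrow> delta F x i \<ge> 0"
  proof -
    fix i assume i: "i \<in> {1..n}"
    have "chi x i = insert (x i) (chi x (i - 1))" using chi_step i by auto
    moreover have "chi x i \<subseteq> S" using chiS i by auto
    ultimately show "delta F x i \<ge> 0" unfolding delta_def using mono by (metis subset_insertI diff_ge_0_iff_ge)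
  qed
  have finK: "finite ({0} \<union> {k \<in> {1..n}. stop_ok c F B x k})" by auto
  have kin: "k \<in> {0} \<union> {k \<in> {1..n}. stop_ok c F B x k}" unfolding k_def mech_index_def
    by (rule Max_in[OF finK]) auto
  have kn: "k \<le> n" using kin by auto
  have notstop: "\<And>j. k < j \<Longrightarrow> j \<le> n \<Longrightarrow> \<not> stop_ok c F B x j"
  proof
    fix j assume "k < j" "j \<le> n" "stop_ok c F B x j"
    then have "j \<le> k" unfolding k_def mech_index_def using finK by (intro Max_ge) auto
    then show False using \<open>k < j\<close> by simp
  qed
  have zerod: "\<And>j. k < j \<Longrightarrow> j \<le> n \<Longrightarrow> c (x j) = 0 \<Longrightarrow> delta F x j = 0"
  proof -
    fix j assume j: "k < j" "j \<le> n" "c (x j) = 0"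
    have "delta F x j \<ge> 0" using dnn j by auto
    moreover have "\<not> delta F x j > 0" using notstop[OF j(1,2)] j(3) Bp unfolding stop_ok_def by auto
    ultimately show "delta F x j = 0" by simp
  qed
  have flat: "\<And>m. m \<le> n \<Longrightarrow> (\<forall>j. k < j \<and> j \<le> m \<longrightarrow> c (x j) = 0) \<Longrightarrow> k \<le> m \<Longrightarrow> F (chi x m) = F (chi x k)"
  proof -
    fix m assume m: "m \<le> n" "\<forall>j. k < j \<and> j \<le> m \<longrightarrow> c (x j) = 0" "k \<le> m"
    have "\<forall>d. k + d \<le> m \<longrightarrow> F (chi x (k + d)) = F (chi x k)"
    proof
      fix d show "k + d \<le> m \<longrightarrow> F (chi x (k + d)) = F (chi x k)"
      proof (induction d)
        case 0 then show ?case by simp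
      next
        case (Suc d)
        show ?case
        proof
          assume h: "k + Suc d \<le> m"
          have "delta F x (k + Suc d) = 0" using zerod[of "k + Suc d"] m h by auto
          then show "F (chi x (k + Suc d)) = F (chi x k)" using Suc h unfolding delta_def by simp
        qed
      qed
    qed
    then have "k + (m - k) \<le> m \<longrightarrow> F (chi x (k + (m - k))) = F (chi x k)" by (rule spec)
    then have "F (chi x (k + (m - k))) = F (chi x k)" using m(3) by linarith
    moreover have "k + (m - k) = m" using m(3) by simp
    ultimately show "F (chi x m) = F (chi x k)" by simp
  qed
  have goalF: "F (chi x k) \<ge> (1/3 - 2 * th / 3) * Fs"
  proof (cases "\<exists>i. k < i \<and> i \<le> n \<and> c (x i) > 0")
    case False
    have "\<forall>j. k < j \<and> j \<le> n \<longrightarrow> c (x j) = 0"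
    proof (intro allI impI)
      fix j assume j: "k < j \<and> j \<le> n"
      then have "c (x j) \<ge> 0" using cnn xS[of j] unfolding S_def by auto
      then show "c (x j) = 0" using False j by force
    qed
    then have "F (chi x k) = F S" using flat[of n] kn chin by simp
    moreover have "F Opt \<le> F S" using mono Opt by simp
    ultimately have "F (chi x k) \<ge> Fs" using Opt by simp
    moreover have "(1/3 - 2 * th / 3) * Fs \<le> Fs" using th0 Fsp by (simp add: mult_le_cancel_right1)
    ultimately show ?thesis by linarith
  next
    case True
    define i where "i = (LEAST i. k < i \<and> i \<le> n \<and> c (x i) > 0)"
    have iP: "k < i \<and> i \<le> n \<and> c (x i) > 0" unfolding i_def using True by (rule LeastI_ex)
    have before: "\<forall>j. k < j \<and> j \<le> i - 1 \<longrightarrow> c (x j) = 0"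
    proof (intro allI impI)
      fix j assume j: "k < j \<and> j \<le> i - 1"
      have "\<not> (k < j \<and> j \<le> n \<and> c (x j) > 0)" using j iP unfolding i_def
      proof -
        have "j < i" using j iP by linarith
        then show ?thesis unfolding i_def by (rule not_less_Least)
      qed
      moreover have "c (x j) \<ge> 0" using cnn xS[of j] j iP unfolding S_def by auto
      ultimately show "c (x j) = 0" using j iP by auto
    qed
    define A where "A = chi x (i - 1)"
    have FA: "F A = F (chi x k)" unfolding A_def using flat[of "i - 1"] iP before by auto
    have i1: "i \<in> {1..n}" using iP by auto
    have AS: "A \<subseteq> S" unfolding A_def by (rule chiS) (use iP in linarith)
    have xiA: "x i \<in> S - A" using xnot[OF i1] xS[OF i1] unfolding A_def by auto
    have chii: "chi x i = A \<union> {x i}" unfolding A_def using chi_step[of i x] iP by simp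
    define r where "r = delta F x i / c (x i)"
    have dA: "delta F x i = F (A \<union> {x i}) - F A" unfolding delta_def A_def chii[unfolded A_def] ..
    have r0: "r \<ge> 0" unfolding r_def using dnn[OF i1] iP by simp
    have grd: "\<And>s. s \<in> S - A \<Longrightarrow> F (A \<union> {s}) - F A \<le> r * c s"
    proof -
      fix s assume s: "s \<in> S - A"
      have gall: "\<forall>i\<in>{1..n}. \<forall>s \<in> sellers n - chi x (i - 1).
        gain_ratio c F (chi x (i - 1)) s \<le> gain_ratio c F (chi x (i - 1)) (x i)"
        using gs unfolding greedy_seq_def by (rule conjunct2)
      have g: "gain_ratio c F A s \<le> gain_ratio c F A (x i)"
        using bspec[OF bspec[OF gall i1], of s] s unfolding S_def A_def by simp
      have gi: "gain_ratio c F A (x i) = ereal r" unfolding gain_ratio_def r_def dA using iP by simp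
      have cs: "c s \<noteq> 0" proof assume "c s = 0" then show False using g gi by (simp add: gain_ratio_def) qed
      have "c s \<ge> 0" using cnn s unfolding S_def by simp
      then have cs0: "c s > 0" using cs by simp
      have "(F (A \<union> {s}) - F A) / c s \<le> r" using g gi cs unfolding gain_ratio_def by simp
      then show "F (A \<union> {s}) - F A \<le> r * c s" using cs0 by (simp add: divide_le_eq)
    qed
    have "F Opt \<le> F (A \<union> Opt)" using mono AS Opt by auto
    also have "\<dots> \<le> F A + (\<Sum>s\<in>Opt - A. F (A \<union> {s}) - F A)"
      using submod_bound[OF ms[folded S_def] AS finOpt Opt(1)] .
    also have "\<dots> \<le> F A + (\<Sum>s\<in>Opt - A. r * c s)"
      using grd Opt(1) by (intro add_left_mono sum_mono) auto
    also have "\<dots> = F A + r * cost c (Opt - A)" unfolding cost_def by (simp add: sum_distrib_left)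
    also have "\<dots> \<le> F A + r * B"
    proof -
      have "cost c (Opt - A) \<le> cost c Opt" unfolding cost_def
        using finOpt cnn Opt(1) unfolding S_def by (intro sum_mono2) auto
      then show ?thesis using Opt(2) r0 by (simp add: mult_left_mono)
    qed
    finally have key: "Fs \<le> F A + r * B" using Opt by simp
    show ?thesis
    proof (cases "delta F x i = 0")
      case True
      then have "Fs \<le> F (chi x k)" using key FA unfolding r_def by simp
      moreover have "(1/3 - 2 * th / 3) * Fs \<le> Fs" using th0 Fsp by (simp add: mult_le_cancel_right1)
      ultimately show ?thesis by linarith
    next
      case False
      then have dp: "delta F x i > 0" using dnn[OF i1] by simp
      have ns: "F (chi x i) * c (x i) / delta F x i > B / 2" using notstop[of i] iP dp unfolding stop_ok_def by auto
      have "F (chi x i) * c (x i) / delta F x i = F (chi x i) / r" unfolding r_def using dp iP by simp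
      then have "F (chi x i) / r > B / 2" using ns by simp
      moreover have rp: "r > 0" unfolding r_def using dp iP by simp
      ultimately have "F (chi x i) > r * B / 2" by (simp add: field_simps)
      moreover have "F (chi x i) = F A + delta F x i" using dA chii by simp
      moreover have "delta F x i \<le> F {x i} - F {}" using dA subm[of "{}" A "x i"] AS xiA by simp
      moreover have "F {} \<ge> 0" using Fnn by simp
      moreover have "F {x i} \<le> th * Fs" using Fsing xiA thM by simp
      ultimately have "3 * F A > Fs - 2 * th * Fs" using key by linarith
      then show ?thesis using FA by (simp add: algebra_simps)
    qed
  qed
  then show ?thesis using goalF by (simp only: k_def th_def Fs_def S_def)
qed

theorem lemma21:
  "\<exists>\<rho> :: real \<Rightarrow> real. (\<rho> \<longlongrightarrow> 1/3) (at_right 0) \<and>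
     (\<forall>(n::nat) (c::nat \<Rightarrow> real) (F::nat set \<Rightarrow> real) (B::real) (x::nat \<Rightarrow> nat).
        n \<ge> 1 \<and> B > 0 \<and> (\<forall>i\<in>sellers n. c i \<ge> 0) \<and>
        monotone_submodular (sellers n) F \<and> Fstar (sellers n) c F B > 0 \<and>
        greedy_seq n c F x
        \<longrightarrow> F (chi x (mech_index n c F B x))
              \<ge> \<rho> (largeness (sellers n) c F B) * Fstar (sellers n) c F B)"
proof (intro exI[of _ "\<lambda>t. 1/3 - 2 * t / 3"] conjI allI impI)
  show "((\<lambda>t::real. 1/3 - 2 * t / 3) \<longlongrightarrow> 1/3) (at_right 0)"
  proof -
    have "((\<lambda>t::real. 1/3 - 2 * t / 3) \<longlongrightarrow> 1/3 - 2 * 0 / 3) (at_right 0)"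
      by (intro tendsto_intros) auto
    then show ?thesis by simp
  qed
next
  fix n c F B x
  assume "1 \<le> n \<and> 0 < B \<and> (\<forall>i\<in>sellers n. 0 \<le> c i) \<and> monotone_submodular (sellers n) F \<and>
       0 < Fstar (sellers n) c F B \<and> greedy_seq n c F x"
  then show "(1/3 - 2 * largeness (sellers n) c F B / 3) * Fstar (sellers n) c F B
         \<le> F (chi x (mech_index n c F B x))" using main_bound by blast
qed

end
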